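(* Let $a\ge b\ge1$ be integers and define $c_j,d_j$ ($j\in\mathbb Z_+$) by $c_0=d_0=0$, $c_1=d_1=1$, $c_{k+2}+c_k=a d_{k+1}$, $d_{k+2}+d_k=b c_{k+1}$. Then both inequalities $$bc_{k+1}^2+ad_k^2-abc_{k+1}d_k+2ad_k-abc_{k+1}+a\le0,$$ $$bc_k^2+ad_{k+1}^2-abd_{k+1}c_k-abd_{k+1}+2bc_k+b\le0$$ hold (1) for all $k\ge0$ if $b\ge2$, and (2) for all $k\ge1$ if $b=1$ and $a\ge5$.
   Context: $\mathbb Z_+=\{0,1,2,\dots\}$. *)

theory Defs
  imports Main
begin

fun cd_seq :: "int \<Rightarrow> int \<Rightarrow> nat \<Rightarrow> int \<times> int" where
  "cd_seq a b 0 = (0, 0)"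
| "cd_seq a b (Suc 0) = (1, 1)"
| "cd_seq a b (Suc (Suc k)) =
     (a * snd (cd_seq a b (Suc k)) - fst (cd_seq a b k),
      b * fst (cd_seq a b (Suc k)) - snd (cd_seq a b k))"

definition cseq :: "int \<Rightarrow> int \<Rightarrow> nat \<Rightarrow> int" where
  "cseq a b k = fst (cd_seq a b k)"

definition dseq :: "int \<Rightarrow> int \<Rightarrow> nat \<Rightarrow> int" where
  "dseq a b k = snd (cd_seq a b k)"

end

theory Submission
  imports Defs
begin

lemma rec_c: "cseq a b (k+2) = a * dseq a b (k+1) - cseq a b k"
  by (simp add: cseq_def dseq_def)

lemma rec_d: "dseq a b (k+2) = b * cseq a b (k+1) - dseq a b k"
  by (simp add: cseq_def dseq_def)

lemma small:
  "cseq a b 0 = 0" "dseq a b 0 = 0" "cseq a b 1 = 1" "dseq a b 1 = 1"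
  "cseq a b 2 = a" "dseq a b 2 = b" "cseq a b 3 = a*b - 1" "dseq a b 3 = a*b - 1"
  "cseq a b 4 = a*(a*b-2)" "dseq a b 4 = b*(a*b-2)"
  by (simp_all add: cseq_def dseq_def numeral_eq_Suc algebra_simps)

lemma smallS:
  "cseq a b (Suc 0) = 1" "dseq a b (Suc 0) = 1"
  "cseq a b (Suc (Suc 0)) = a" "dseq a b (Suc (Suc 0)) = b"
  "cseq a b (Suc (Suc (Suc 0))) = a*b - 1" "dseq a b (Suc (Suc (Suc 0))) = a*b - 1"
  "cseq a b (Suc (Suc (Suc (Suc 0)))) = a*(a*b-2)" "dseq a b (Suc (Suc (Suc (Suc 0)))) = b*(a*b-2)"
  using small by (simp_all add: numeral_eq_Suc)

lemma rec4_c: "cseq a b (k+4) = (a*b-2) * cseq a b (k+2) - cseq a b k"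
proof -
  have 1: "cseq a b (k+4) = a * dseq a b (k+3) - cseq a b (k+2)"
    using rec_c[of a b "k+2"] by (simp add: numeral_eq_Suc)
  have 2: "dseq a b (k+3) = b * cseq a b (k+2) - dseq a b (k+1)"
    using rec_d[of a b "k+1"] by (simp add: numeral_eq_Suc)
  show ?thesis using 1 2 rec_c[of a b k] by (simp add: algebra_simps)
qed

lemma rec4_d: "dseq a b (k+4) = (a*b-2) * dseq a b (k+2) - dseq a b k"
proof -
  have 1: "dseq a b (k+4) = b * cseq a b (k+3) - dseq a b (k+2)"
    using rec_d[of a b "k+2"] by (simp add: numeral_eq_Suc)
  have 2: "cseq a b (k+3) = a * dseq a b (k+2) - cseq a b (k+1)"
    using rec_c[of a b "k+1"] by (simp add: numeral_eq_Suc)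
  show ?thesis using 1 2 rec_d[of a b k] by (simp add: algebra_simps)
qed

lemma mono_diff:
  fixes x :: "nat \<Rightarrow> int"
  assumes r: "\<And>j. x (j+2) = t * x (j+1) - x j" and t: "t \<ge> 2"
    and "x 0 \<ge> 0" "x 1 \<ge> x 0"
  shows "x j \<ge> 0 \<and> x (j+1) - x j \<ge> x 1 - x 0"
proof (induction j)
  case 0 then show ?case using assms by simp
next
  case (Suc j)
  have x1: "x (j+1) \<ge> 0" using Suc assms(4) by simp
  then have "(t-2) * x (j+1) \<ge> 0" using t by simp
  moreover have "x (j+2) - x (j+1) = (t-2) * x (j+1) + (x (j+1) - x j)"
    using r[of j] by (simp add: algebra_simps)
  ultimately show ?case using Suc x1 by simp
qed

lemma diff_c:
  assumes "a*b \<ge> 4" "cseq a b r \<ge> 0" "cseq a b (r+2) \<ge> cseq a b r"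
  shows "cseq a b (2*j+r+2) - cseq a b (2*j+r) \<ge> cseq a b (r+2) - cseq a b r"
proof -
  define x where "x j = cseq a b (2*j+r)" for j
  have "x j \<ge> 0 \<and> x (j+1) - x j \<ge> x 1 - x 0"
  proof (rule mono_diff[where t="a*b-2"])
    fix j
    have e: "2*(j+2)+r = (2*j+r)+4" "2*(j+1)+r = (2*j+r)+2" by simp_all
    show "x (j+2) = (a*b-2) * x (j+1) - x j" unfolding x_def e rec4_c ..
  qed (use assms in \<open>simp_all add: x_def\<close>)
  then show ?thesis by (simp add: x_def algebra_simps)
qed

lemma diff_d:
  assumes "a*b \<ge> 4" "dseq a b r \<ge> 0" "dseq a b (r+2) \<ge> dseq a b r"
  shows "dseq a b (2*j+r+2) - dseq a b (2*j+r) \<ge> dseq a b (r+2) - dseq a b r"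
proof -
  define x where "x j = dseq a b (2*j+r)" for j
  have "x j \<ge> 0 \<and> x (j+1) - x j \<ge> x 1 - x 0"
  proof (rule mono_diff[where t="a*b-2"])
    fix j
    have e: "2*(j+2)+r = (2*j+r)+4" "2*(j+1)+r = (2*j+r)+2" by simp_all
    show "x (j+2) = (a*b-2) * x (j+1) - x j" unfolding x_def e rec4_d ..
  qed (use assms in \<open>simp_all add: x_def\<close>)
  then show ?thesis by (simp add: x_def algebra_simps)
qed

definition F :: "int \<Rightarrow> int \<Rightarrow> int \<Rightarrow> int \<Rightarrow> int" where
  "F a b x y = b*x^2 - a*b*x*y + a*y^2"

lemma Finv: "F a b (cseq a b (k+1)) (dseq a b k) = (if even k then b else a)
   \<and> F a b (cseq a b k) (dseq a b (k+1)) = (if even k then a else b)"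
proof (induction k)
  case 0 then show ?case by (simp add: F_def cseq_def dseq_def)
next
  case (Suc k)
  have 1: "cseq a b (Suc k + 1) = a * dseq a b (k+1) - cseq a b k" using rec_c[of a b k] by simp
  have 2: "dseq a b (Suc k + 1) = b * cseq a b (k+1) - dseq a b k" using rec_d[of a b k] by simp
  have e1: "F a b (a * dseq a b (k+1) - cseq a b k) (dseq a b (k+1)) = F a b (cseq a b k) (dseq a b (k+1))"
    by (simp add: F_def power2_eq_square algebra_simps)
  have e2: "F a b (cseq a b (k+1)) (b * cseq a b (k+1) - dseq a b k) = F a b (cseq a b (k+1)) (dseq a b k)"
    by (simp add: F_def power2_eq_square algebra_simps)
  show ?case using Suc 1 2 e1 e2 by simp
qed



theorem lemma4p4:
  fixes a b :: int
  assumes "a \<ge> b" and "b \<ge> 1"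
  defines "c \<equiv> cseq a b" and "d \<equiv> dseq a b"
  shows "\<forall>k::nat. ((b \<ge> 2 \<and> k \<ge> 0) \<or> (b = 1 \<and> a \<ge> 5 \<and> k \<ge> 1)) \<longrightarrow>
           b * (c (k+1))^2 + a * (d k)^2 - a*b*c (k+1) * d k + 2*a*d k - a*b*c (k+1) + a \<le> 0
         \<and> b * (c k)^2 + a * (d (k+1))^2 - a*b*d (k+1) * c k - a*b*d (k+1) + 2*b*c k + b \<le> 0"
proof (intro allI impI)
  fix k :: nat
  assume H: "(b \<ge> 2 \<and> k \<ge> 0) \<or> (b = 1 \<and> a \<ge> 5 \<and> k \<ge> 1)"
  have ab4: "a*b \<ge> 4"
  proof (cases "b \<ge> 2")
    case True
    then have "a*b \<ge> 2*2" using assms(1) by (intro mult_mono) auto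
    then show ?thesis by simp
  next
    case False then show ?thesis using H by auto
  qed
  define Dc where "Dc = c (k+2) - c k"
  define Dd where "Dd = d (k+2) - d k"
  have Q1: "b * (c (k+1))^2 + a * (d k)^2 - a*b*c (k+1) * d k + 2*a*d k - a*b*c (k+1) + a
      = F a b (c (k+1)) (d k) + a - a * Dd"
    unfolding Dd_def d_def c_def rec_d by (simp add: F_def power2_eq_square algebra_simps)
  have Q2: "b * (c k)^2 + a * (d (k+1))^2 - a*b*d (k+1) * c k - a*b*d (k+1) + 2*b*c k + b
      = F a b (c k) (d (k+1)) + b - b * Dc"
    unfolding Dc_def d_def c_def rec_c by (simp add: F_def power2_eq_square algebra_simps)
  have Fv: "F a b (c (k+1)) (d k) = (if even k then b else a)"
           "F a b (c k) (d (k+1)) = (if even k then a else b)"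
    using Finv[of a b k] by (simp_all add: c_def d_def)
  have R: "(if even k then b else a) + a - a * Dd \<le> 0 \<and> (if even k then a else b) + b - b * Dc \<le> 0"
  proof (cases "even k")
    case False
    then obtain j where kj: "k = 2*j+1" by (metis oddE)
    have "Dc \<ge> a*b-2"
      using diff_c[of a b 1 j] ab4 unfolding Dc_def c_def kj by (simp add: small smallS)
    have "Dd \<ge> a*b-2"
      using diff_d[of a b 1 j] ab4 unfolding Dd_def d_def kj by (simp add: small smallS)
    have "a * Dd \<ge> a * 2" using \<open>Dd \<ge> a*b-2\<close> ab4 assms by (intro mult_left_mono) auto
    moreover have "b * Dc \<ge> b * 2" using \<open>Dc \<ge> a*b-2\<close> ab4 assms by (intro mult_left_mono) auto
    ultimately show ?thesis using False by simp
  next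
    case True
    then obtain j where kj: "k = 2*j" by (metis evenE)
    show ?thesis
    proof (cases "b \<ge> 2")
      case b2: True
      have "Dc \<ge> a"
        using diff_c[of a b 0 j] ab4 assms unfolding Dc_def c_def kj by (simp add: small smallS)
      have "Dd \<ge> b"
        using diff_d[of a b 0 j] ab4 assms unfolding Dd_def d_def kj by (simp add: small smallS)
      have "(a-1)*(b-1) \<ge> 1*1" using b2 assms by (intro mult_mono) auto
      then have s: "a*b \<ge> a+b" by (simp add: algebra_simps)
      have "a * Dd \<ge> a * b" using \<open>Dd \<ge> b\<close> assms by (intro mult_left_mono) auto
      moreover have "b * Dc \<ge> b * a" using \<open>Dc \<ge> a\<close> assms by (intro mult_left_mono) auto
      ultimately show ?thesis using True s by (simp add: algebra_simps)
    next
      case False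
      with H have b1: "b = 1" "a \<ge> 5" "k \<ge> 1" by auto
      then obtain i where ij: "j = i+1" using kj by (cases j) auto
      have kk: "k = 2*i+2" using kj ij by simp
      have "Dc \<ge> a*(a-2) - a"
        using diff_c[of a b 2 i] ab4 b1 unfolding Dc_def c_def kk by (simp add: small smallS)
      have "Dd \<ge> a-3"
        using diff_d[of a b 2 i] ab4 b1 unfolding Dd_def d_def kk by (simp add: small smallS)
      have h2: "a*(a-3) \<ge> a*2" using b1 by (intro mult_left_mono) auto
      have h1: "a * Dd \<ge> a * (a-3)" using \<open>Dd \<ge> a-3\<close> b1 by (intro mult_left_mono) auto
      have h3: "a*(a-2) - a = a*(a-3)" by (simp add: algebra_simps)
      have "a+1 \<le> a*Dd" using h1 h2 b1 by linarith
      moreover have "a+1 \<le> Dc" using h2 h3 \<open>Dc \<ge> a*(a-2) - a\<close> b1 by linarith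
      ultimately show ?thesis using True b1 by simp
    qed
  qed
  then show "b * (c (k+1))^2 + a * (d k)^2 - a*b*c (k+1) * d k + 2*a*d k - a*b*c (k+1) + a \<le> 0
         \<and> b * (c k)^2 + a * (d (k+1))^2 - a*b*d (k+1) * c k - a*b*d (k+1) + 2*b*c k + b \<le> 0"
    unfolding Q1 Q2 Fv .
qed

end
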